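(* Let $k\geq 2$ be an integer and let $f\colon\mathbb{N}_0\to\{0,1\}$ be given by $f(n)=\lfloor\sqrt{n}\rfloor \bmod 2$. Then $f$ is not asymptotically $k$-automatic.
   Context: $\mathbb{N}_0=\{0,1,2,\dots\}$. A property holds for almost all $n\in\mathbb{N}_0$ if the set of $n$ where it fails has upper density $\limsup_{N\to\infty}|\cdot\cap\{0,\dots,N-1\}|/N$ equal to $0$. Sequences $f,g$ are asymptotically equal, $f\simeq g$, if $f(n)=g(n)$ for almost all $n$. The $k$-kernel of $f$ is $\mathcal{N}_k(f) = \{ n \mapsto f(k^\alpha n + r) : \alpha, r \in \mathbb{N}_0,\ r < k^\alpha\}$; $f$ is asymptotically $k$-automatic if $\mathcal{N}_k(f)/{\simeq}$ is finite. *)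

theory Defs
  imports "HOL-Analysis.Analysis"
begin

definition upper_density :: "nat set \<Rightarrow> ereal" where
  "upper_density A = limsup (\<lambda>N. ereal (real (card (A \<inter> {0..<N})) / real N))"

definition almost_all :: "(nat \<Rightarrow> bool) \<Rightarrow> bool" where
  "almost_all P \<longleftrightarrow> upper_density {n. \<not> P n} = 0"

definition asymp_eq :: "(nat \<Rightarrow> 'a) \<Rightarrow> (nat \<Rightarrow> 'a) \<Rightarrow> bool" where
  "asymp_eq f g \<longleftrightarrow> almost_all (\<lambda>n. f n = g n)"

definition asymp_eq_rel :: "((nat \<Rightarrow> 'a) \<times> (nat \<Rightarrow> 'a)) set" where
  "asymp_eq_rel = {(f, g). asymp_eq f g}"

definition kernel :: "nat \<Rightarrow> (nat \<Rightarrow> 'a) \<Rightarrow> (nat \<Rightarrow> 'a) set" where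
  "kernel k f = {(\<lambda>n. f (k ^ \<alpha> * n + r)) | \<alpha> r. r < k ^ \<alpha>}"

definition asymp_automatic :: "nat \<Rightarrow> (nat \<Rightarrow> 'a) \<Rightarrow> bool" where
  "asymp_automatic k f \<longleftrightarrow> finite (kernel k f // asymp_eq_rel)"

end

theory Submission imports Defs begin

lemma floor_sqrt_nat:
  assumes "j^2 \<le> m" "m < (j+1)^2"
  shows "\<lfloor>sqrt (real m)\<rfloor> = int j"
proof -
  have a: "real j ^ 2 \<le> real m" using assms(1) by (metis of_nat_le_iff of_nat_power)
  have b: "real m < (real j + 1)^2" using assms(2) by (metis of_nat_less_iff of_nat_power of_nat_Suc add.commute Suc_eq_plus1)
  have "real j \<le> sqrt (real m)" using a real_le_rsqrt by blast
  moreover have "sqrt (real m) < real j + 1"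
    using b by (metis abs_of_nonneg add_nonneg_nonneg of_nat_0_le_iff real_sqrt_abs real_sqrt_less_iff zero_le_one)
  ultimately show ?thesis by (simp add: floor_eq_iff)
qed

lemma key:
  fixes k a b t e :: nat
  assumes k: "k \<ge> 2" and ab: "1 \<le> a" "a < b" and t: "t \<ge> 1" and e: "2*t < e" "e < 4*t"
  shows "\<lfloor>sqrt (real (k^(2*a) * (k^(2*b)*t^2 + e)))\<rfloor> mod 2
      \<noteq> \<lfloor>sqrt (real (k^(2*b) * (k^(2*b)*t^2 + e)))\<rfloor> mod (2::int)"
proof -
  define K where "K = k^a"
  define L where "L = k^b"
  define M where "M = k^(b-a)"
  have LKM: "L = K*M" unfolding K_def L_def M_def using ab by (simp add: power_add[symmetric])
  have M2: "M \<ge> 2" unfolding M_def using k ab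
    by (metis le_trans power_increasing power_one_right zero_less_diff Suc_leI One_nat_def less_imp_le_nat one_le_numeral)
  have K1: "K \<ge> 1" unfolding K_def using k by simp
  have L1: "L \<ge> 1" using LKM K1 M2 by (metis le_trans mult_le_mono one_le_numeral mult_1)
  have eqL: "k^(2*b) = L^2" "k^(2*a) = K^2" unfolding K_def L_def by (simp_all add: power_mult mult.commute)
  define n where "n = L^2*t^2 + e"
  have "L^2 * (2*t+1) \<le> L^2 * e" using e by (intro mult_le_mono2) simp
  have LL: "L^2 \<ge> 1" using L1 by simp
  have ex1: "(L^2*t+1)^2 = L^2*(L^2*t^2) + 2*L^2*t + 1" by (simp add: power2_eq_square algebra_simps)
  have ex2: "L^2*n = L^2*(L^2*t^2) + L^2*e" unfolding n_def by (simp add: algebra_simps)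
  have ex3: "(L^2*t+1+1)^2 = L^2*(L^2*t^2) + L^2*(4*t) + 4" by (simp add: power2_eq_square algebra_simps)
  have "L^2 * (2*t+1) = 2*L^2*t + L^2" by (simp add: algebra_simps)
  hence h1: "(L^2*t+1)^2 \<le> L^2 * n" unfolding ex1 ex2 using LL \<open>L^2 * (2*t+1) \<le> L^2 * e\<close> by linarith
  have "L^2 * e < L^2 * (4*t)" using e L1 by simp
  hence h2: "L^2 * n < (L^2*t+1+1)^2" unfolding ex2 ex3 by linarith
  have h3: "(K*L*t)^2 \<le> K^2 * n" unfolding n_def
    by (simp add: power2_eq_square algebra_simps)
  have "e < 2*M*t" proof -
    have "4*t \<le> 2*M*t" using M2 by simp
    thus ?thesis using e by linarith
  qed
  hence kk: "K^2 * e < K^2*(2*M*t)" using K1 by simp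
  have ex4: "K^2 * n = (K*L*t)^2 + K^2*e" unfolding n_def by (simp add: power2_eq_square algebra_simps)
  have ex5: "(K*L*t+1)^2 = (K*L*t)^2 + K^2*(2*M*t) + 1" unfolding LKM by (simp add: power2_eq_square algebra_simps)
  have h4: "K^2 * n < (K*L*t+1)^2" unfolding ex4 ex5 using kk by linarith
  have fL: "\<lfloor>sqrt (real (L^2 * n))\<rfloor> = int (L^2*t+1)" by (rule floor_sqrt_nat[OF h1 h2])
  have fK: "\<lfloor>sqrt (real (K^2 * n))\<rfloor> = int (K*L*t)" by (rule floor_sqrt_nat[OF h3 h4])
  have par: "(L^2*t+1) mod 2 \<noteq> (K*L*t) mod 2"
  proof (cases "even k")
    case True
    then have "even K" "even L" unfolding K_def L_def using ab by auto
    then have "even (L^2*t)" "even (K*L*t)" by auto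
    then show ?thesis by presburger
  next
    case False
    then have "odd K" "odd L" unfolding K_def L_def by auto
    then have o1: "(L^2) mod 2 = 1" "(K*L) mod 2 = 1" by (simp_all add: odd_iff_mod_2_eq_one[symmetric] del: One_nat_def)
    have "(L^2*t) mod 2 = ((L^2) mod 2 * t) mod 2" by (rule mod_mult_left_eq[symmetric])
    moreover have "(K*L*t) mod 2 = ((K*L) mod 2 * t) mod 2" by (rule mod_mult_left_eq[symmetric])
    ultimately have "(L^2*t) mod 2 = t mod 2" "(K*L*t) mod 2 = t mod 2" using o1 by simp_all
    then show ?thesis by presburger
  qed
  show ?thesis unfolding eqL n_def[symmetric] fL fK using par
    by (metis of_nat_eq_iff zmod_int of_nat_numeral)
qed

lemma dens:
  fixes D :: "nat set" and L :: nat
  assumes L: "L \<ge> 2" and D: "\<And>t e. t \<ge> 1 \<Longrightarrow> 2*t < e \<Longrightarrow> e < 4*t \<Longrightarrow> L^2*t^2+e \<in> D"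
  shows "upper_density D \<noteq> 0"
proof -
  have L4: "L^2 \<ge> 4" using L by (metis power_mono zero_le_numeral power2_eq_square num_double numeral_times_numeral)
  define c :: real where "c = 1 / (4 * real L^2)"
  have cpos: "c > 0" unfolding c_def using L by simp
  define X where "X = (\<lambda>N. ereal (real (card (D \<inter> {0..<N})) / real N))"
  define r where "r = (\<lambda>T::nat. 4*L^2*(T+1)^2)"
  have bnd: "L^2*t^2 + 2*t + d < L^2*(t+1)^2" if "d \<le> t" for t d
  proof -
    have "L^2*(t+1)^2 = L^2*t^2 + 2*L^2*t + L^2" by (simp add: power2_eq_square algebra_simps)
    moreover have "2*L^2*t \<ge> 8*t" using L4 by simp
    moreover have "L^2 > 0" using L by simp
    ultimately show ?thesis using that by linarith
  qed
  have cardb: "card (D \<inter> {0..<4*L^2*T^2}) \<ge> T*T" if T: "T \<ge> 1" for T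
  proof -
    define A where "A = {T..<2*T} \<times> {1..T}"
    define \<phi> where "\<phi> = (\<lambda>(t,d). L^2*t^2 + 2*t + d)"
    have mono: "\<phi> (t,d) < \<phi> (t',d')" if "(t,d) \<in> A" "t < t'" for t d t' d'
    proof -
      have "d \<le> t" using that unfolding A_def by auto
      hence "\<phi> (t,d) < L^2*(t+1)^2" unfolding \<phi>_def using bnd by simp
      also have "\<dots> \<le> L^2*t'^2" using that(2) by (intro mult_le_mono2 power_mono) auto
      also have "\<dots> \<le> \<phi> (t',d')" unfolding \<phi>_def by simp
      finally show ?thesis .
    qed
    have inj: "inj_on \<phi> A"
    proof (rule inj_onI)
      fix x y assume xy: "x \<in> A" "y \<in> A" "\<phi> x = \<phi> y"
      obtain t d where x: "x = (t,d)" by fastforce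
      obtain t' d' where y: "y = (t',d')" by fastforce
      have "t = t'"
      proof (rule linorder_cases[of t t'])
        assume "t < t'" thus ?thesis using mono[of t d t' d'] xy x y by simp
      next
        assume "t' < t" thus ?thesis using mono[of t' d' t d] xy x y by simp
      qed
      thus "x = y" using xy x y unfolding \<phi>_def by simp
    qed
    have sub: "\<phi> ` A \<subseteq> D \<inter> {0..<4*L^2*T^2}"
    proof
      fix z assume "z \<in> \<phi> ` A"
      then obtain t d where td: "t \<ge> T" "t < 2*T" "d \<ge> 1" "d \<le> T" and z: "z = L^2*t^2 + (2*t+d)"
        unfolding A_def \<phi>_def by auto
      have "z \<in> D" unfolding z using T td by (intro D) auto
      moreover have "z < L^2*(t+1)^2" unfolding z using bnd[of d t] td by simp
      moreover have "L^2*(t+1)^2 \<le> L^2*(2*T)^2" using td by (intro mult_le_mono2 power_mono) auto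
      moreover have "L^2*(2*T)^2 = 4*L^2*T^2" by (simp add: power2_eq_square)
      ultimately show "z \<in> D \<inter> {0..<4*L^2*T^2}" by (metis IntI atLeastLessThan_iff le0 less_le_trans)
    qed
    have "card A = T*T" unfolding A_def by (simp add: card_cartesian_product)
    moreover have "card A \<le> card (D \<inter> {0..<4*L^2*T^2})"
      by (rule card_inj_on_le[OF inj sub]) simp
    ultimately show ?thesis by simp
  qed
  have sm: "strict_mono r" unfolding r_def
    by (rule strict_monoI) (use L in \<open>auto intro!: mult_strict_left_mono power_strict_mono\<close>)
  have ev: "\<forall>\<^sub>F T in sequentially. ereal c \<le> (X \<circ> r) T"
  proof (rule always_eventually, rule allI)
    fix T :: nat
    have cb: "real (T+1)*real (T+1) \<le> real (card (D \<inter> {0..<r T}))"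
      using cardb[of "T+1"] unfolding r_def by (metis le_add2 of_nat_le_iff of_nat_mult)
    have rT: "real (r T) = 4*real L^2*(real (T+1)*real (T+1))" unfolding r_def by (simp add: power2_eq_square algebra_simps)
    have pos: "4*real L^2*(real (T+1)*real (T+1)) > 0" using L by simp
    have P: "real (T+1)*real (T+1) > 0" by simp
    have "c = real (T+1)*real (T+1) / real (r T)" unfolding c_def rT using P L by simp
    also have "\<dots> \<le> real (card (D \<inter> {0..<r T})) / real (r T)"
      using cb pos rT by (intro divide_right_mono) auto
    finally show "ereal c \<le> (X \<circ> r) T" unfolding X_def by simp
  qed
  have "ereal c \<le> limsup (X \<circ> r)" by (rule le_Limsup[OF _ ev]) simp
  also have "\<dots> \<le> limsup X" by (rule limsup_subseq_mono[OF sm])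
  finally have "ereal c \<le> upper_density D" unfolding upper_density_def X_def .
  thus ?thesis using cpos by auto
qed


lemma noneq:
  fixes k a b :: nat
  assumes k: "k \<ge> 2" and ab: "1 \<le> a" "a < b"
  defines "f \<equiv> (\<lambda>n::nat. (\<lfloor>sqrt (real n)\<rfloor> mod 2 :: int))"
  shows "upper_density {n. f (k^(2*a)*n) \<noteq> f (k^(2*b)*n)} \<noteq> 0"
proof (rule dens[where L = "k^b"])
  show "k^b \<ge> 2" using k ab by (metis le_trans less_imp_le_nat not_less_zero power_increasing power_one_right Suc_leI gr0I le_numeral_extra(2) zero_less_iff_neq_zero one_le_numeral)
next
  fix t e :: nat assume "t \<ge> 1" "2*t < e" "e < 4*t"
  from key[OF k ab this] show "(k^b)^2*t^2+e \<in> {n. f (k^(2*a)*n) \<noteq> f (k^(2*b)*n)}"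
    unfolding f_def by (simp add: power_mult[symmetric] mult.commute)
qed

theorem proposition5p1:
  fixes k :: nat
  assumes "k \<ge> 2"
  shows "\<not> asymp_automatic k (\<lambda>n::nat. (\<lfloor>sqrt (real n)\<rfloor> mod 2 :: int))"
proof
  define f where "f = (\<lambda>n::nat. (\<lfloor>sqrt (real n)\<rfloor> mod 2 :: int))"
  define g where "g = (\<lambda>a::nat. \<lambda>n. f (k^(2*a)*n))"
  assume "asymp_automatic k (\<lambda>n::nat. (\<lfloor>sqrt (real n)\<rfloor> mod 2 :: int))"
  hence fin: "finite (kernel k f // asymp_eq_rel)" unfolding asymp_automatic_def f_def .
  have refl: "asymp_eq h h" for h :: "nat \<Rightarrow> int"
    unfolding asymp_eq_def almost_all_def upper_density_def by (simp add: Limsup_const)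
  have ne: "\<not> asymp_eq (g a) (g b)" if "1 \<le> a" "1 \<le> b" "a \<noteq> b" for a b
  proof (cases "a < b")
    case True
    show ?thesis using noneq[OF assms \<open>1 \<le> a\<close> True]
      unfolding asymp_eq_def almost_all_def g_def f_def by simp
  next
    case False
    hence "b < a" using that by simp
    have "{n. g a n \<noteq> g b n} = {n. g b n \<noteq> g a n}" by auto
    thus ?thesis using noneq[OF assms \<open>1 \<le> b\<close> \<open>b < a\<close>]
      unfolding asymp_eq_def almost_all_def g_def f_def by simp
  qed
  define \<phi> where "\<phi> = (\<lambda>a. asymp_eq_rel `` {g a})"
  have gk: "g a \<in> kernel k f" for a
    unfolding kernel_def g_def using assms
    by (intro CollectI exI[of _ "2*a"] exI[of _ 0]) simp
  have sub: "\<phi> ` {1..} \<subseteq> kernel k f // asymp_eq_rel"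
    unfolding \<phi>_def using gk by (auto intro: quotientI)
  have inj: "inj_on \<phi> {1..}"
  proof (rule inj_onI)
    fix a b assume ab: "a \<in> {1::nat..}" "b \<in> {1..}" "\<phi> a = \<phi> b"
    have "g b \<in> \<phi> b" unfolding \<phi>_def asymp_eq_rel_def using refl by simp
    hence "g b \<in> \<phi> a" using ab by simp
    hence "asymp_eq (g a) (g b)" unfolding \<phi>_def asymp_eq_rel_def by simp
    thus "a = b" using ne ab by auto
  qed
  have "finite (\<phi> ` {1..})" using finite_subset[OF sub fin] .
  hence "finite {1::nat..}" using finite_imageD inj by blast
  thus False using infinite_Ici by blast
qed

end
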